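(* Let $G(X)=\sum_{n\ge 1}c_nX^n\in\mathbb{F}_2[[X]]$ be the compositional inverse of $F(X)=\sum_{n\ge1}t_nX^n\in\mathbb{F}_2[[X]]$, and set $c_0=0$. Then $G$ satisfies each of the polynomial equations $$X^2G(X)^3+X(1+X)G(X)^2+(X^2+1)G(X)+X(X+1)=0,$$ $$X^3G(X)^4+(1+X)G(X)+X(X^2+1)=0$$ over $\mathbb{F}_2[[X]]$. In particular, $c_0=0$, $c_1=c_2=1$, $c_3=0$, and for every $n\ge 1$: $$c_{4n}=c_{4n-1},\quad c_{4n+1}=c_{4n-1},\quad c_{4n+2}=c_{4n-1},\quad c_{4n+3}\equiv c_{4n-1}+c_n \pmod 2.$$
   Context: For $n\in\mathbb{N}=\{0,1,2,\dots\}$ let $s_2(n)$ denote the sum of the binary digits of $n$, and let $t_n=s_2(n)\bmod 2\in\{0,1\}$ (the Prouhet–Thue–Morse sequence). Since $t_0=0$ and $t_1=1$, the series $F(X)=\sum_{n\ge1}t_nX^n\in\mathbb{F}_2[[X]]$ has a unique compositional inverse $G\in\mathbb{F}_2[[X]]$, i.e. $F(G(X))=G(F(X))=X$. The coefficients $c_n$ are identified with integers in $\{0,1\}$. *)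

theory Defs
  imports "HOL-Computational_Algebra.Formal_Power_Series" "HOL-Library.Z2"
begin

fun s2 :: "nat \<Rightarrow> nat" where
  "s2 n = (if n = 0 then 0 else n mod 2 + s2 (n div 2))"

definition tm :: "nat \<Rightarrow> nat" where
  "tm n = s2 n mod 2"

definition tmF :: "bit fps" where
  "tmF = Abs_fps (\<lambda>n. if n \<ge> 1 then of_nat (tm n) else 0)"

end

theory Submission
  imports Defs
begin



declare s2.simps[simp del]

lemma s2_0: "s2 0 = 0" by (subst s2.simps) simp

lemma bit_add_self: "(x::bit) + x = 0"
proof -
  have "x + x = 2 * x" by (rule mult_2[symmetric])
  then show ?thesis by simp
qed
lemma bit_mult_self: "(x::bit) * x = x"
  by (cases x) auto
lemma bit_of_nat: "(of_nat n :: bit) = (if even n then 0 else 1)"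
  by (induction n) auto

lemma fps_bit_sq_nth: "fps_nth ((f::bit fps)^2) n = (if even n then fps_nth f (n div 2) else 0)"
proof -
  let ?g = "\<lambda>i. fps_nth f i * fps_nth f (n-i)"
  have split: "{0..n} = {i. i \<le> n \<and> 2*i < n} \<union> {i. i \<le> n \<and> 2*i > n} \<union> {i. i\<le>n \<and> 2*i = n}" by auto
  have AB: "sum ?g {i. i \<le> n \<and> 2*i > n} = sum ?g {i. i \<le> n \<and> 2*i < n}"
    by (rule sum.reindex_bij_witness[of _ "\<lambda>i. n - i" "\<lambda>i. n - i"]) (auto simp: mult.commute)
  have C: "sum ?g {i. i\<le>n \<and> 2*i = n} = (if even n then fps_nth f (n div 2) else 0)"
  proof (cases "even n")
    case True
    then have "{i. i\<le>n \<and> 2*i = n} = {n div 2}" by auto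
    moreover have e: "n - n div 2 = n div 2" using True by auto
    ultimately show ?thesis using True by (simp only: sum.insert finite.emptyI empty_iff not_False_eq_True sum.empty add_0_right e bit_mult_self if_True)
  next
    case False
    then have "{i. i\<le>n \<and> 2*i = n} = {}" by auto
    then show ?thesis using False by (simp only: sum.empty if_False)
  qed
  have U: "sum ?g ({i. i \<le> n \<and> 2*i < n} \<union> {i. i \<le> n \<and> 2*i > n}) = sum ?g {i. i \<le> n \<and> 2*i < n} + sum ?g {i. i \<le> n \<and> 2*i > n}"
    by (rule sum.union_disjoint) auto
  have "fps_nth (f^2) n = sum ?g {0..n}" by (simp add: power2_eq_square fps_mult_nth)
  also have "\<dots> = sum ?g ({i. i \<le> n \<and> 2*i < n} \<union> {i. i \<le> n \<and> 2*i > n} \<union> {i. i\<le>n \<and> 2*i = n})"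
    by (rule arg_cong[where f="sum ?g"], fact split)
  also have "\<dots> = sum ?g ({i. i \<le> n \<and> 2*i < n} \<union> {i. i \<le> n \<and> 2*i > n}) + sum ?g {i. i\<le>n \<and> 2*i = n}"
    by (rule sum.union_disjoint) auto
  also have "\<dots> = sum ?g {i. i \<le> n \<and> 2*i < n} + sum ?g {i. i \<le> n \<and> 2*i > n} + sum ?g {i. i\<le>n \<and> 2*i = n}"
    by (simp only: U)
  also have "\<dots> = (if even n then fps_nth f (n div 2) else 0)" by (simp only: AB C bit_add_self add_0_left)
  finally show ?thesis .
qed

lemma fps_bit_4_nth: "fps_nth ((f::bit fps)^4) n = (if 4 dvd n then fps_nth f (n div 4) else 0)"
proof -
  have eq: "f^4 = (f^2)^2" by (simp flip: power_mult)
  have "fps_nth (f^4) n = (if even n then (if even (n div 2) then fps_nth f (n div 2 div 2) else 0) else 0)"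
    by (subst eq, simp only: fps_bit_sq_nth)
  moreover have "even n \<and> even (n div 2) \<longleftrightarrow> 4 dvd n" by presburger
  moreover have "n div 2 div 2 = n div 4" by (simp add: div_mult2_eq)
  ultimately show ?thesis by (cases "4 dvd n"; cases "even n"; cases "even (n div 2)") auto
qed

lemma s2_even: "s2 (2*n) = s2 n"
  by (cases "n=0") (simp_all add: s2_0, subst s2.simps, simp)
lemma s2_odd: "s2 (2*n+1) = 1 + s2 n" by (subst s2.simps) simp

lemma fps_bit_two: "(2::bit fps) = 0"
  by (simp add: fps_eq_iff fps_numeral_nth)

lemma fps_bit_add_self: "(f::bit fps) + f = 0"
proof -
  have "f + f = 2 * f" by (rule mult_2[symmetric])
  then show ?thesis by (simp add: fps_bit_two)
qed

lemma fps_bit_eq_iff_add: "((f::bit fps) = g) \<longleftrightarrow> f + g = 0"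
proof
  assume "f = g" then show "f + g = 0" by (simp add: fps_bit_add_self)
next
  assume h: "f + g = 0"
  have "f = (f + g) + g" by (simp only: add.assoc fps_bit_add_self add_0_right)
  then show "f = g" by (simp add: h)
qed

lemma tmF_nth: "fps_nth tmF n = (of_nat (s2 n) :: bit)"
proof (cases "n = 0")
  case True then show ?thesis by (simp add: tmF_def s2_0)
next
  case False
  have "(of_nat (s2 n mod 2) :: bit) = of_nat (s2 n)" by (simp only: bit_of_nat even_mod_2_iff)
  then show ?thesis using False by (simp add: tmF_def tm_def)
qed

definition H :: "bit fps" where "H = Abs_fps (\<lambda>n. if odd n then 1 else 0)"

lemma tmF_eq: "tmF = (1 + fps_X) * tmF^2 + H"
proof (rule fps_ext)
  fix n
  have "fps_nth ((1 + fps_X) * tmF^2 + H) n = fps_nth (tmF^2) n + (if n = 0 then 0 else fps_nth (tmF^2) (n-1)) + (if odd n then 1 else 0)"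
    by (simp add: distrib_right H_def)
  also have "\<dots> = fps_nth tmF n"
  proof (cases "even n")
    case True
    then obtain k where k: "n = 2*k" by blast
    have a: "fps_nth (tmF^2) n = of_nat (s2 k)" by (simp add: fps_bit_sq_nth k tmF_nth)
    have b: "(if n = 0 then 0 else fps_nth (tmF^2) (n-1)) = 0"
    proof (cases "n = 0")
      case False
      then have "odd (n-1)" using k by presburger
      then show ?thesis by (simp add: fps_bit_sq_nth)
    qed simp
    have c: "fps_nth tmF n = of_nat (s2 k)" by (simp add: tmF_nth k s2_even)
    show ?thesis using True by (simp only: a b c, simp)
  next
    case False
    then obtain k where k: "n = 2*k+1" using oddE by blast
    have a: "fps_nth (tmF^2) n = 0" using False by (simp add: fps_bit_sq_nth)
    have b: "(if n = 0 then 0 else fps_nth (tmF^2) (n-1)) = of_nat (s2 k)"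
      by (simp add: k fps_bit_sq_nth tmF_nth)
    have c: "fps_nth tmF n = 1 + of_nat (s2 k)" by (simp only: tmF_nth k s2_odd of_nat_add of_nat_1)
    show ?thesis using False by (simp add: a b c add.commute)
  qed
  finally show "fps_nth tmF n = fps_nth ((1 + fps_X) * tmF^2 + H) n" by simp
qed

lemma odd_less2: "odd (n::nat) \<Longrightarrow> n < 2 \<longleftrightarrow> n = 1" by presburger

lemma H_eq: "(1 + fps_X^2) * H = fps_X"
proof (rule fps_ext)
  fix n
  show "fps_nth ((1 + fps_X^2) * H) n = fps_nth fps_X n"
    by (auto simp: distrib_right fps_X_power_mult_nth H_def fps_X_nth odd_less2)
qed

lemma F_alg: "(1 + fps_X)^3 * tmF^2 + (1 + fps_X)^2 * tmF + fps_X = 0"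
proof -
  have sq: "(1 + fps_X)^2 = (1 + fps_X^2 :: bit fps)"
  proof -
    have "(1 + fps_X)^2 = (1 + fps_X^2 :: bit fps) + 2 * fps_X" by (simp add: power2_eq_square algebra_simps)
    then show ?thesis by (simp add: fps_bit_two)
  qed
  have "(1 + fps_X)^2 * tmF = (1 + fps_X)^2 * ((1 + fps_X) * tmF^2 + H)"
    using tmF_eq by simp
  also have "\<dots> = (1 + fps_X)^3 * tmF^2 + fps_X"
  proof -
    have a: "(1 + fps_X)^2 * ((1 + fps_X) * tmF^2) = (1 + fps_X)^3 * (tmF^2 :: bit fps)"
      by (simp add: power3_eq_cube power2_eq_square mult.assoc)
    have b: "(1 + fps_X)^2 * H = fps_X" using H_eq sq by simp
    show ?thesis by (simp only: distrib_left a b)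
  qed
  finally have "(1 + fps_X)^2 * tmF = (1 + fps_X)^3 * tmF^2 + fps_X" .
  then have "(1 + fps_X)^2 * tmF + ((1 + fps_X)^3 * tmF^2 + fps_X) = 0"
    using fps_bit_eq_iff_add by blast
  then show ?thesis by (simp add: algebra_simps)
qed

lemma bit_eq_iff_add: "((a::bit) = b) \<longleftrightarrow> a + b = 0"
proof
  assume "a = b" then show "a + b = 0" by (simp only: bit_add_self)
next
  assume h: "a + b = 0"
  have "a = (a + b) + b" by (simp only: add.assoc bit_add_self add_0_right)
  then show "a = b" by (simp only: h add_0_left)
qed

lemma cubic_ident: fixes X G :: "'a::comm_ring_1"
  shows "X^2 * G ^ 3 + X * (1 + X) * G^2 + (X^2 + 1) * G + X * (X + 1)
     = (1+G)^3 * X^2 + (1+G)^2 * X + G - 2*(X^2*G + X^2*G^2 + X*G)"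
  by (simp add: algebra_simps power2_eq_square power3_eq_cube)

lemma quartic_ident: fixes X G :: "'a::comm_ring_1"
  shows "X ^ 3 * G ^ 4 + (1 + X) * G + X * (X^2 + 1)
     = (X*G+1+X) * (X^2 * G ^ 3 + X * (1 + X) * G^2 + (X^2 + 1) * G + X * (X + 1))
       - 2*(X^2*(1+X)*G^3 + (X^3+X^2+X)*G^2 + (X^3+X^2)*G + X^2)"
  by (simp add: algebra_simps power2_eq_square power3_eq_cube power4_eq_xxxx)

lemma compose_step:
  fixes G :: "bit fps"
  assumes "tmF oo G = fps_X" and G0: "fps_nth G 0 = 0"
  shows "(1+G)^3 * fps_X^2 + (1+G)^2 * fps_X + G = 0"
proof -
  have c1: "(1 + fps_X) oo G = 1 + G"
    by (simp add: fps_compose_add_distrib fps_X_fps_compose_startby0[OF G0])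
  have p3: "(1 + fps_X)^3 oo G = (1+G)^3" by (simp only: fps_compose_power[OF G0, symmetric] c1)
  have p2: "(1 + fps_X)^2 oo G = (1+G)^2" by (simp only: fps_compose_power[OF G0, symmetric] c1)
  have t2: "tmF^2 oo G = fps_X^2" by (simp only: fps_compose_power[OF G0, symmetric] assms(1))
  have "((1 + fps_X)^3 * tmF^2 + (1 + fps_X)^2 * tmF + fps_X) oo G = 0"
    using F_alg by simp
  moreover have "((1 + fps_X)^3 * tmF^2 + (1 + fps_X)^2 * tmF + fps_X) oo G
     = (1+G)^3 * fps_X^2 + (1+G)^2 * fps_X + G"
    by (simp only: fps_compose_add_distrib fps_compose_mult_distrib[OF G0] p3 p2 t2 assms(1) fps_X_fps_compose_startby0[OF G0])
  ultimately show ?thesis by simp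
qed


lemma cubic_step:
  fixes G :: "bit fps"
  assumes D: "(1+G)^3 * fps_X^2 + (1+G)^2 * fps_X + G = 0"
  shows "fps_X\<^sup>2 * G ^ 3 + fps_X * (1 + fps_X) * G\<^sup>2 + (fps_X\<^sup>2 + 1) * G + fps_X * (fps_X + 1) = 0"
  by (subst cubic_ident, simp only: D fps_bit_two mult_zero_left diff_zero)

lemma quartic_step:
  fixes G :: "bit fps"
  assumes E: "fps_X\<^sup>2 * G ^ 3 + fps_X * (1 + fps_X) * G\<^sup>2 + (fps_X\<^sup>2 + 1) * G + fps_X * (fps_X + 1) = 0"
  shows "fps_X ^ 3 * G ^ 4 + (1 + fps_X) * G + fps_X * (fps_X\<^sup>2 + 1) = 0"
  by (subst quartic_ident, simp only: E fps_bit_two mult_zero_left mult_zero_right diff_zero)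

lemma coeff_step:
  fixes G :: "bit fps"
  assumes Q: "fps_X ^ 3 * G ^ 4 + (1 + fps_X) * G + fps_X * (fps_X\<^sup>2 + 1) = 0"
  shows "(if m < 3 then 0 else (if 4 dvd (m-3) then fps_nth G ((m-3) div 4) else 0))
        + (fps_nth G m + (if m = 0 then 0 else fps_nth G (m-1)))
        + (if m = 1 \<or> m = 3 then 1 else 0) = 0"
proof -
  have e: "fps_X * (fps_X\<^sup>2 + 1) = fps_X^3 + (fps_X :: bit fps)"
    by (simp add: algebra_simps power3_eq_cube power2_eq_square)
  have 1: "fps_nth (fps_X ^ 3 * G ^ 4) m = (if m < 3 then 0 else (if 4 dvd (m-3) then fps_nth G ((m-3) div 4) else 0))"
    by (simp add: fps_X_power_mult_nth fps_bit_4_nth)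
  have 2: "fps_nth ((1 + fps_X) * G) m = fps_nth G m + (if m = 0 then 0 else fps_nth G (m-1))"
    by (simp add: distrib_right)
  have 3: "fps_nth (fps_X * (fps_X\<^sup>2 + 1)) m = (if m = 1 \<or> m = 3 then 1 else 0)"
    by (auto simp: e fps_X_power_nth fps_X_nth)
  have "fps_nth (fps_X ^ 3 * G ^ 4 + (1 + fps_X) * G + fps_X * (fps_X\<^sup>2 + 1)) m = 0"
    using Q by simp
  then show ?thesis by (simp only: fps_add_nth 1 2 3)
qed


lemma bit_add_3: "(x::bit) + (y + (x + y)) = 0"
proof -
  have "x + (y + (x + y)) = (x + x) + (y + y)" by (simp only: add.assoc add.left_commute)
  then show ?thesis by (simp only: bit_add_self add_0_left)
qed

lemma bit_addD: "(a::bit) + b = 0 \<Longrightarrow> a = b" using bit_eq_iff_add by blast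

lemma coeff_facts:
  fixes c :: "nat \<Rightarrow> bit"
  assumes R: "\<And>m. (if m < 3 then 0 else (if 4 dvd (m-3) then c ((m-3) div 4) else 0))
        + (c m + (if m = 0 then 0 else c (m-1)))
        + (if m = 1 \<or> m = 3 then 1 else 0) = 0" and G0: "c 0 = 0"
  shows "c 1 = 1 \<and> c 2 = 1 \<and> c 3 = 0 \<and> (\<forall>n\<ge>1. c (4*n) = c (4*n - 1) \<and> c (4*n + 1) = c (4*n - 1)
               \<and> c (4*n + 2) = c (4*n - 1) \<and> c (4*n + 3) = c (4*n - 1) + c n)"
proof -
  have "c 1 + 1 = 0" using R[of 1] G0 by simp
  then have g1: "c 1 = 1" by (rule bit_addD)
  have "c 2 + c 1 = 0" using R[of 2] by simp
  then have "c 2 = c 1" by (rule bit_addD)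
  then have g2: "c 2 = 1" using g1 by simp
  have "0 + (c 3 + c 2) + 1 = 0" using R[of 3] G0 by simp
  then have "c 3 + (c 2 + 1) = 0" by (simp only: add_0_left add.assoc)
  then have "c 3 = c 2 + 1" by (rule bit_addD)
  then have g3: "c 3 = 0" using g2 by (simp add: bit_add_self)
  have main: "c (4*n) = c (4*n - 1) \<and> c (4*n + 1) = c (4*n - 1)
               \<and> c (4*n + 2) = c (4*n - 1) \<and> c (4*n + 3) = c (4*n - 1) + c n"
    if n: "n \<ge> 1" for n
  proof -
    have a: "c (4*n) = c (4*n - 1)"
    proof -
      have "\<not> 4 dvd (4*n - 3)" using n by presburger
      then have "c (4*n) + c (4*n - 1) = 0" using R[of "4*n"] n by simp
      then show ?thesis by (rule bit_addD)
    qed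
    have b: "c (4*n+1) = c (4*n)"
    proof -
      have "\<not> 4 dvd (4*n + 1 - 3)" using n by presburger
      then have "c (4*n+1) + c (4*n) = 0" using R[of "4*n+1"] n by simp
      then show ?thesis by (rule bit_addD)
    qed
    have c: "c (4*n+2) = c (4*n+1)"
    proof -
      have "\<not> 4 dvd (4*n + 2 - 3)" using n by presburger
      then have "c (4*n+2) + c (4*n+1) = 0" using R[of "4*n+2"] n by simp
      then show ?thesis by (rule bit_addD)
    qed
    have d: "c (4*n+3) = c (4*n+2) + c n"
    proof -
      have "c n + (c (4*n+3) + c (4*n+2)) = 0"
        using R[of "4*n+3"] n by simp
      then have "c n = c (4*n+3) + c (4*n+2)" by (rule bit_addD)
      then have "c (4*n+3) + (c (4*n+2) + c n) = 0"
        by (simp only: bit_add_3)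
      then show ?thesis by (rule bit_addD)
    qed
    show ?thesis using a b c d by simp
  qed
  show ?thesis using g1 g2 g3 main by blast
qed

theorem mainTheorem1:
  fixes G :: "bit fps"
  assumes "tmF oo G = fps_X" and "G oo tmF = fps_X"
  shows "fps_X\<^sup>2 * G ^ 3 + fps_X * (1 + fps_X) * G\<^sup>2 + (fps_X\<^sup>2 + 1) * G + fps_X * (fps_X + 1) = 0
    \<and> fps_X ^ 3 * G ^ 4 + (1 + fps_X) * G + fps_X * (fps_X\<^sup>2 + 1) = 0
    \<and> fps_nth G 0 = 0 \<and> fps_nth G 1 = 1 \<and> fps_nth G 2 = 1 \<and> fps_nth G 3 = 0
    \<and> (\<forall>n\<ge>1. fps_nth G (4*n) = fps_nth G (4*n - 1) \<and> fps_nth G (4*n + 1) = fps_nth G (4*n - 1)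
               \<and> fps_nth G (4*n + 2) = fps_nth G (4*n - 1) \<and> fps_nth G (4*n + 3) = fps_nth G (4*n - 1) + fps_nth G n)"
proof -
  have G0: "fps_nth G 0 = 0"
    using arg_cong[OF assms(2), of "\<lambda>p. fps_nth p 0"] by simp
  have E: "fps_X\<^sup>2 * G ^ 3 + fps_X * (1 + fps_X) * G\<^sup>2 + (fps_X\<^sup>2 + 1) * G + fps_X * (fps_X + 1) = 0"
    by (rule cubic_step[OF compose_step[OF assms(1) G0]])
  have Q: "fps_X ^ 3 * G ^ 4 + (1 + fps_X) * G + fps_X * (fps_X\<^sup>2 + 1) = 0"
    by (rule quartic_step[OF E])
  note R = coeff_step[OF Q]
  have C: "fps_nth G 1 = 1 \<and> fps_nth G 2 = 1 \<and> fps_nth G 3 = 0 \<and> (\<forall>n\<ge>1. fps_nth G (4*n) = fps_nth G (4*n - 1) \<and> fps_nth G (4*n + 1) = fps_nth G (4*n - 1)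
               \<and> fps_nth G (4*n + 2) = fps_nth G (4*n - 1) \<and> fps_nth G (4*n + 3) = fps_nth G (4*n - 1) + fps_nth G n)"
    by (rule coeff_facts[of "fps_nth G", OF R G0])
  show ?thesis using E Q G0 C by blast
qed

end
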